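(* Let $n,m$ be positive integers with $2m<n$, $d=2^n$, $\tilde d=2^{n-2m}$, and $0<h\le1$. If $\delta:=h^2-2^{-2m}>0$, then $$\frac{\operatorname{Area}\big(\mathrm{CAP}^{(2\tilde d)}(h)\big)}{S_{2d-1}}\le\exp\big(-2(d+1)\delta^2\big).$$
   Context: For $1\le q\le p-1$, $\mathrm{CAP}^{(q)}(h)=\{x\in S^{p-1}\subset\mathbb{R}^p: h^2\le\sum_{j=1}^q x_j^2\le1\}$, here with $p=2d$. $\operatorname{Area}$ is the surface measure on $S^{2d-1}$ and $S_{2d-1}=2\pi^d/\Gamma(d)$ is the total area of $S^{2d-1}$. *)

theory Defs
  imports "HOL-Analysis.Analysis"
begin

text \<open>Points of R^p are represented as extensional functions on the index set {..<p}
  (coordinates 0..p-1), with Lebesgue measure given by the product measure.\<close>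

definition vnorm :: "nat \<Rightarrow> (nat \<Rightarrow> real) \<Rightarrow> real" where
  "vnorm p x = sqrt (\<Sum>i<p. (x i)\<^sup>2)"

definition unit_sphere :: "nat \<Rightarrow> (nat \<Rightarrow> real) set" where
  "unit_sphere p = {x \<in> {..<p} \<rightarrow>\<^sub>E UNIV. (\<Sum>i<p. (x i)\<^sup>2) = 1}"

definition CAP :: "nat \<Rightarrow> nat \<Rightarrow> real \<Rightarrow> (nat \<Rightarrow> real) set" where
  "CAP p q h = {x \<in> unit_sphere p. h\<^sup>2 \<le> (\<Sum>j<q. (x j)\<^sup>2) \<and> (\<Sum>j<q. (x j)\<^sup>2) \<le> 1}"

text \<open>Surface measure on S^(p-1), defined via the cone construction:
  Area(A) = p * Leb({r y : 0 < r <= 1, y in A}).\<close>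
definition cone :: "nat \<Rightarrow> (nat \<Rightarrow> real) set \<Rightarrow> (nat \<Rightarrow> real) set" where
  "cone p A = {x \<in> {..<p} \<rightarrow>\<^sub>E UNIV. 0 < vnorm p x \<and> vnorm p x \<le> 1 \<and>
                 restrict (\<lambda>i. x i / vnorm p x) {..<p} \<in> A}"

definition sphere_area :: "nat \<Rightarrow> (nat \<Rightarrow> real) set \<Rightarrow> real" where
  "sphere_area p A = real p * measure (Pi\<^sub>M {..<p} (\<lambda>_. lborel)) (cone p A)"

end

theory Submission
  imports Defs "HOL-Probability.Hoeffding"
begin

lemma unit_ball_vol_even: "unit_ball_vol (real (2*k)) = pi^k / fact k"
proof -
  have "Gamma (real (2*k) / 2 + 1) = fact k"
    using Gamma_fact[of k] by (simp add: add.commute)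
  moreover have "pi powr (real (2*k) / 2) = pi^k"
    by (simp add: powr_realpow)
  ultimately show ?thesis by (simp add: unit_ball_vol_def)
qed

lemma power_integral_0x:
  assumes "0 \<le> x" "k > 0" "c \<ge> 0"
  shows "(\<integral>\<^sup>+t. ennreal (c * t^(k-1)) * indicator {0..x} t \<partial>lborel) = ennreal (c * x^k / k)"
proof -
  have "((\<lambda>t. c * t^(k-1)) has_integral (c * x^k / k - c * 0^k / k)) {0..x}"
  proof (rule fundamental_theorem_of_calculus)
    show "0 \<le> x" by fact
    fix t assume "t \<in> {0..x}"
    have "((\<lambda>t. c * t^k / k) has_real_derivative (c * t^(k-1))) (at t within {0..x})"
      using assms
      by (auto intro!: derivative_eq_intros)
    then show "((\<lambda>t. c * t^k / k) has_vector_derivative (c * t^(k-1))) (at t within {0..x})"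
      by (simp add: has_real_derivative_iff_has_vector_derivative)
  qed
  moreover have "c * 0^k / k = 0" using assms by simp
  ultimately have "((\<lambda>t. c * t^(k-1)) has_integral (c * x^k / k)) {0..x}" by simp
  then show ?thesis
    using assms by (subst nn_integral_has_integral_lebesgue') (auto intro!: mult_nonneg_nonneg)
qed

lemma measure_eqI_atMost:
  fixes M N :: "real measure"
  assumes sets: "sets M = sets borel" "sets N = sets borel"
  assumes fin: "\<And>x. emeasure M {..x} < \<infinity>"
  assumes eq: "\<And>x. emeasure M {..x} = emeasure N {..x}"
  shows "M = N"
proof (rule measure_eqI_generator_eq_countable[where E="range atMost" and \<Omega>=UNIV and A="atMost ` Rats"])
  show "Int_stable (range atMost :: real set set)"
    by (auto simp: Int_stable_def)
  show "range atMost \<subseteq> Pow (UNIV::real set)" by auto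
  show "sets M = sigma_sets UNIV (range atMost)" "sets N = sigma_sets UNIV (range atMost)"
    unfolding sets borel_eq_atMost by auto
  show "atMost ` \<rat> \<subseteq> range atMost" by auto
  show "\<Union> (atMost ` \<rat>) = (UNIV :: real set)"
    by (auto intro: Rats_no_top_le)
  show "countable (atMost ` \<rat> :: real set set)" by (auto intro: countable_rat)
  show "\<And>a. a \<in> atMost ` \<rat> \<Longrightarrow> emeasure M a \<noteq> \<infinity>" using fin by (auto simp: less_top)
qed (use eq in auto)

lemma ball_emeasure_sq:
  assumes A: "finite A" "card A = 2*k" and x: "x > 0"
  shows "emeasure (PiM A (\<lambda>_. lborel)) ({f. (\<Sum>i\<in>A. (f i)\<^sup>2) \<le> x} \<inter> space (PiM A (\<lambda>_. lborel)))
         = ennreal (pi^k / fact k * x^k)"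
proof -
  have "{f. (\<Sum>i\<in>A. (f i)\<^sup>2) \<le> x} = {f. sqrt (\<Sum>i\<in>A. (f i)\<^sup>2) \<le> sqrt x}"
    by (auto simp: real_sqrt_le_iff)
  moreover have "sqrt x ^ (2*k) = x^k" using x
    by (simp add: power_mult)
  ultimately show ?thesis
    using emeasure_cball_aux[OF A(1), of "sqrt x"] x A(2) unit_ball_vol_even[of k] by simp
qed

lemma radial_distr:
  assumes A: "finite A" "card A = 2*k" and k: "k > 0"
  shows "distr (PiM A (\<lambda>_. lborel)) borel (\<lambda>f. \<Sum>i\<in>A. (f i)\<^sup>2) =
         density lborel (\<lambda>t. ennreal (pi^k / fact (k-1) * t^(k-1)) * indicator {0..} t)"
    (is "?L = ?R")
proof -
  define G where "G x = (if x < 0 then 0 else pi^k / fact k * x^k)" for x :: real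
  have D: "emeasure ?R {..x} = ennreal (G x)" for x
  proof (cases "x < 0")
    case True
    have "emeasure ?R {..x} = (\<integral>\<^sup>+t. ennreal (pi^k / fact (k-1) * t^(k-1)) * indicator {0..} t * indicator {..x} t \<partial>lborel)"
      by (rule emeasure_density) auto
    also have "\<dots> = (\<integral>\<^sup>+(t::real). 0 \<partial>lborel)"
      by (rule nn_integral_cong) (use True in \<open>auto simp: indicator_def\<close>)
    finally have "emeasure ?R {..x} = (\<integral>\<^sup>+(t::real). 0 \<partial>lborel)" .
    then show ?thesis using True by (simp add: G_def)
  next
    case False
    then have "emeasure ?R {..x} = (\<integral>\<^sup>+t. ennreal (pi^k / fact (k-1) * t^(k-1)) * indicator {0..x} t \<partial>lborel)"
      by (subst emeasure_density) (auto intro!: nn_integral_cong simp: indicator_def)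
    also have "\<dots> = ennreal (pi^k / fact (k-1) * x^k / k)"
      using False k by (subst power_integral_0x) auto
    also have "pi^k / fact (k-1) * x^k / k = G x"
      using False k by (simp add: G_def fact_reduce[of k])
    finally show ?thesis .
  qed
  have P: "emeasure ?L {..x} = ennreal (G x)" for x
  proof -
    have "emeasure ?L {..x} = emeasure (PiM A (\<lambda>_. lborel)) ({f. (\<Sum>i\<in>A. (f i)\<^sup>2) \<le> x} \<inter> space (PiM A (\<lambda>_. lborel)))"
      by (subst emeasure_distr) (auto simp: vimage_def)
    also have "\<dots> = ennreal (G x)"
    proof (cases x "0::real" rule: linorder_cases)
      case less
      then have "{f. (\<Sum>i\<in>A. (f i)\<^sup>2) \<le> x} = {}"
        by (auto simp: not_le intro: less_le_trans[OF _ sum_nonneg])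
      then show ?thesis using less by (simp add: G_def)
    next
      case greater
      then show ?thesis using ball_emeasure_sq[OF A greater] by (simp add: G_def)
    next
      case equal
      let ?E = "{f. (\<Sum>i\<in>A. (f i)\<^sup>2) \<le> (0::real)} \<inter> space (PiM A (\<lambda>_. lborel))"
      have le: "emeasure (PiM A (\<lambda>_. lborel)) ?E \<le> ennreal (pi^k / fact k * t^k)" if "t > 0" for t
      proof -
        have "emeasure (PiM A (\<lambda>_. lborel)) ?E \<le>
              emeasure (PiM A (\<lambda>_. lborel)) ({f. (\<Sum>i\<in>A. (f i)\<^sup>2) \<le> t} \<inter> space (PiM A (\<lambda>_. lborel)))"
          using that by (intro emeasure_mono) (auto, measurable)
        then show ?thesis using ball_emeasure_sq[OF A that] by simp
      qed
      have lim: "((\<lambda>t. ennreal (pi^k / fact k * t^k)) \<longlongrightarrow> ennreal (pi^k / fact k * 0^k)) (at_right 0)"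
        by (intro tendsto_ennrealI tendsto_intros)
      have "emeasure (PiM A (\<lambda>_. lborel)) ?E \<le> ennreal (pi^k / fact k * 0^k)"
        by (rule tendsto_le[OF trivial_limit_at_right_real lim tendsto_const])
           (rule eventually_mono[OF eventually_at_right_less le])
      then show ?thesis using equal k by (simp add: G_def power_0_left)
    qed
    finally show ?thesis .
  qed
  show ?thesis
  proof (rule measure_eqI_atMost)
    fix x show "emeasure ?L {..x} = emeasure ?R {..x}" unfolding D P ..
    show "emeasure ?L {..x} < \<infinity>" unfolding P by simp
  qed auto
qed

lemma radial_integral:
  assumes A: "finite A" "card A = 2*k" and k: "k > 0" and F[measurable]: "F \<in> borel_measurable borel"
  shows "(\<integral>\<^sup>+f. F (\<Sum>i\<in>A. (f i)\<^sup>2) \<partial>PiM A (\<lambda>_. lborel)) =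
         (\<integral>\<^sup>+t. ennreal (pi^k / fact (k-1) * t^(k-1)) * indicator {0..} t * F t \<partial>lborel)"
proof -
  have "(\<integral>\<^sup>+f. F (\<Sum>i\<in>A. (f i)\<^sup>2) \<partial>PiM A (\<lambda>_. lborel)) =
        (\<integral>\<^sup>+t. F t \<partial>distr (PiM A (\<lambda>_. lborel)) borel (\<lambda>f. \<Sum>i\<in>A. (f i)\<^sup>2))"
    by (subst nn_integral_distr) auto
  also have "\<dots> = (\<integral>\<^sup>+t. ennreal (pi^k / fact (k-1) * t^(k-1)) * indicator {0..} t * F t \<partial>lborel)"
    unfolding radial_distr[OF A k] by (subst nn_integral_density) (auto simp: mult.assoc)
  finally show ?thesis .
qed


lemma cone_CAP_eq:
  assumes qp: "q \<le> p"
  shows "cone p (CAP p q h) = {x \<in> {..<p} \<rightarrow>\<^sub>E UNIV. 0 < (\<Sum>i<p. (x i)\<^sup>2) \<and> (\<Sum>i<p. (x i)\<^sup>2) \<le> 1 \<and>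
            h\<^sup>2 * (\<Sum>i<p. (x i)\<^sup>2) \<le> (\<Sum>i<q. (x i)\<^sup>2)}"
proof (intro set_eqI iffI)
  fix x :: "nat \<Rightarrow> real"
  let ?N = "\<Sum>i<p. (x i)\<^sup>2" and ?Q = "\<Sum>i<q. (x i)\<^sup>2"
  let ?y = "restrict (\<lambda>i. x i / vnorm p x) {..<p}"
  have N0: "?N \<ge> 0" by (simp add: sum_nonneg)
  have vn: "vnorm p x = sqrt ?N" by (simp add: vnorm_def)
  have QN: "?Q \<le> ?N" using qp by (intro sum_mono2) auto
  have key: "(\<Sum>i<p. (?y i)\<^sup>2) = 1 \<and> (\<Sum>j<q. (?y j)\<^sup>2) = ?Q / ?N" if "?N > 0"
  proof -
    have "(\<Sum>i<p. (?y i)\<^sup>2) = (\<Sum>i<p. (x i)\<^sup>2 / ?N)"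
      using that by (intro sum.cong) (auto simp: vn power_divide)
    also have "\<dots> = 1" using that by (simp add: sum_divide_distrib[symmetric])
    finally have 1: "(\<Sum>i<p. (?y i)\<^sup>2) = 1" .
    have "(\<Sum>j<q. (?y j)\<^sup>2) = (\<Sum>j<q. (x j)\<^sup>2 / ?N)"
      using that qp by (intro sum.cong) (auto simp: vn power_divide)
    also have "\<dots> = ?Q / ?N" by (simp add: sum_divide_distrib[symmetric])
    finally show ?thesis using 1 by simp
  qed
  {
    assume "x \<in> cone p (CAP p q h)"
    then have x: "x \<in> {..<p} \<rightarrow>\<^sub>E UNIV" "0 < vnorm p x" "vnorm p x \<le> 1" "?y \<in> CAP p q h"
      by (auto simp: cone_def)
    have Npos: "?N > 0" using x(2) vn by (auto simp: N0)
    have "?N \<le> 1" using x(3) vn by simp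
    moreover have "h\<^sup>2 \<le> ?Q / ?N" using x(4) key[OF Npos] by (simp add: CAP_def)
    then have "h\<^sup>2 * ?N \<le> ?Q" using Npos by (simp add: pos_le_divide_eq)
    ultimately show "x \<in> {x \<in> {..<p} \<rightarrow>\<^sub>E UNIV. 0 < (\<Sum>i<p. (x i)\<^sup>2) \<and> (\<Sum>i<p. (x i)\<^sup>2) \<le> 1 \<and>
            h\<^sup>2 * (\<Sum>i<p. (x i)\<^sup>2) \<le> (\<Sum>i<q. (x i)\<^sup>2)}" using x(1) Npos by auto
  }
  {
    assume "x \<in> {x \<in> {..<p} \<rightarrow>\<^sub>E UNIV. 0 < (\<Sum>i<p. (x i)\<^sup>2) \<and> (\<Sum>i<p. (x i)\<^sup>2) \<le> 1 \<and>
            h\<^sup>2 * (\<Sum>i<p. (x i)\<^sup>2) \<le> (\<Sum>i<q. (x i)\<^sup>2)}"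
    then have x: "x \<in> {..<p} \<rightarrow>\<^sub>E UNIV" "0 < ?N" "?N \<le> 1" "h\<^sup>2 * ?N \<le> ?Q" by auto
    have "h\<^sup>2 \<le> ?Q / ?N" using x by (simp add: pos_le_divide_eq)
    moreover have "?Q / ?N \<le> 1" using x(2) QN by simp
    ultimately have "?y \<in> CAP p q h" using key[OF x(2)]
      by (auto simp: CAP_def unit_sphere_def)
    then show "x \<in> cone p (CAP p q h)" using x vn by (auto simp: cone_def)
  }
qed


lemma cone_bound:
  fixes a b :: nat and h s B :: real
  assumes a: "a > 0" and b: "b > 0" and s: "s = h\<^sup>2" "0 < s" "s \<le> 1"
    and B: "((\<lambda>u. u^(a-1) * (1-u)^b) has_integral B) {s..1}"
  shows "emeasure (PiM {..<2*(a+b)} (\<lambda>_. lborel)) (cone (2*(a+b)) (CAP (2*(a+b)) (2*a) h))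
     \<le> ennreal (pi^a / fact (a-1) * (pi^b / fact (b-1)) / b * (((1-s)/s)^b * s^(a+b) / (a+b) + B))"
proof -
  interpret product_sigma_finite "\<lambda>_::nat. lborel::real measure" by standard
  define I where "I = {..<2*a}"
  define J where "J = {2*a..<2*(a+b)}"
  define Q where "Q x = (\<Sum>i\<in>I. (x i)\<^sup>2)" for x :: "nat \<Rightarrow> real"
  define R where "R x = (\<Sum>i\<in>J. (x i)\<^sup>2)" for x :: "nat \<Rightarrow> real"
  define \<Phi> where "\<Phi> u v = (if 0 < u + v \<and> u + v \<le> 1 \<and> s * (u + v) \<le> u then 1 else (0::ennreal))" for u v :: real
  define \<kappa> where "\<kappa> = (1 - s) / s"
  define M where "M u = min (1 - u) (\<kappa> * u)" for u :: real
  define ca where "ca = pi^a / fact (a-1)"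
  define cb where "cb = pi^b / fact (b-1)"
  define K where "K u = ennreal (cb * M u ^ b / b) * indicator {0..1} u" for u :: real
  have IJ: "I \<inter> J = {}" "finite I" "finite J" "{..<2*(a+b)} = I \<union> J"
    by (auto simp: I_def J_def)
  have cardI: "card I = 2*a" and cardJ: "card J = 2*b" by (auto simp: I_def J_def)
  have \<Phi>_meas[measurable]: "(\<lambda>v. \<Phi> u v) \<in> borel_measurable borel" for u
    unfolding \<Phi>_def by measurable
  have K_meas[measurable]: "K \<in> borel_measurable borel"
    unfolding K_def M_def by measurable
  have Qm[measurable]: "Q \<in> borel_measurable (PiM (I \<union> J) (\<lambda>_. lborel))"
    unfolding Q_def
    by (intro borel_measurable_sum borel_measurable_power)
       (auto intro!: measurable_component_singleton[where M="\<lambda>_. lborel", simplified])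
  have Rm[measurable]: "R \<in> borel_measurable (PiM (I \<union> J) (\<lambda>_. lborel))"
    unfolding R_def
    by (intro borel_measurable_sum borel_measurable_power)
       (auto intro!: measurable_component_singleton[where M="\<lambda>_. lborel", simplified])
  have Qm'[measurable]: "Q \<in> borel_measurable (PiM (I \<union> J) (\<lambda>_. borel))"
    unfolding Q_def
    by (intro borel_measurable_sum borel_measurable_power)
       (auto intro!: measurable_component_singleton[where M="\<lambda>_. borel", simplified])
  have Rm'[measurable]: "R \<in> borel_measurable (PiM (I \<union> J) (\<lambda>_. borel))"
    unfolding R_def
    by (intro borel_measurable_sum borel_measurable_power)
       (auto intro!: measurable_component_singleton[where M="\<lambda>_. borel", simplified])
  have ca0: "ca \<ge> 0" and cb0: "cb \<ge> 0" by (auto simp: ca_def cb_def)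
  have \<kappa>0: "\<kappa> \<ge> 0" using s by (auto simp: \<kappa>_def)
  have cone_eq: "cone (2*(a+b)) (CAP (2*(a+b)) (2*a) h) =
      {x \<in> space (PiM (I \<union> J) (\<lambda>_. lborel)). \<Phi> (Q x) (R x) = 1}"
  proof -
    have ce: "cone (2*(a+b)) (CAP (2*(a+b)) (2*a) h) = {x \<in> {..<2*(a+b)} \<rightarrow>\<^sub>E UNIV. 0 < (\<Sum>i<2*(a+b). (x i)\<^sup>2) \<and> (\<Sum>i<2*(a+b). (x i)\<^sup>2) \<le> 1 \<and>
            h\<^sup>2 * (\<Sum>i<2*(a+b). (x i)\<^sup>2) \<le> (\<Sum>i<2*a. (x i)\<^sup>2)}"
      by (rule cone_CAP_eq) simp
    have e1: "(\<Sum>i<2*(a+b). (x i)\<^sup>2) = Q x + R x" for x :: "nat \<Rightarrow> real"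
      unfolding Q_def R_def IJ(4) by (rule sum.union_disjoint) (use IJ in auto)
    have e2: "(\<Sum>i<2*a. (x i)\<^sup>2) = Q x" for x :: "nat \<Rightarrow> real"
      by (simp add: Q_def I_def)
    have sp: "space (PiM (I \<union> J) (\<lambda>_. lborel)) = {..<2*(a+b)} \<rightarrow>\<^sub>E UNIV"
      unfolding IJ(4) by (simp add: space_PiM)
    show ?thesis
      unfolding ce sp e1 e2 by (auto simp: \<Phi>_def s(1) split: if_splits)
  qed
  define P where "P = PiM (I \<union> J) (\<lambda>_. lborel::real measure)"
  have QR: "(\<lambda>x. Q x + R x) \<in> borel_measurable P" unfolding P_def using Qm Rm by (rule borel_measurable_add)
  have sQR: "(\<lambda>x. s * (Q x + R x)) \<in> borel_measurable P" by (intro borel_measurable_times borel_measurable_const QR)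
  have meas_set: "{x \<in> space P. \<Phi> (Q x) (R x) = 1} \<in> sets P"
  proof -
    have "{x \<in> space P. \<Phi> (Q x) (R x) = 1} = {x \<in> space P. 0 < Q x + R x} \<inter> {x \<in> space P. Q x + R x \<le> 1} \<inter>
             {x \<in> space P. s * (Q x + R x) \<le> Q x}"
      by (auto simp: \<Phi>_def split: if_splits)
    also have "\<dots> \<in> sets P"
      by (intro sets.Int borel_measurable_less borel_measurable_le QR sQR borel_measurable_const)
         (use Qm in \<open>simp add: P_def\<close>)
    finally show ?thesis .
  qed
  have Phi_meas: "(\<lambda>x. \<Phi> (Q x) (R x)) \<in> borel_measurable P"
  proof -
    have "(\<lambda>x. \<Phi> (Q x) (R x)) \<in> borel_measurable P \<longleftrightarrow> (indicator {x \<in> space P. \<Phi> (Q x) (R x) = 1} :: _ \<Rightarrow> ennreal) \<in> borel_measurable P"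
      by (rule measurable_cong) (auto simp: indicator_def \<Phi>_def)
    then show ?thesis using borel_measurable_indicator[OF meas_set] by simp
  qed
  have E1: "emeasure (PiM {..<2*(a+b)} (\<lambda>_. lborel)) (cone (2*(a+b)) (CAP (2*(a+b)) (2*a) h))
      = (\<integral>\<^sup>+x. \<Phi> (Q x) (R x) \<partial>PiM (I \<union> J) (\<lambda>_. lborel))"
  proof -
    have "emeasure P {x \<in> space P. \<Phi> (Q x) (R x) = 1} = (\<integral>\<^sup>+x. indicator {x \<in> space P. \<Phi> (Q x) (R x) = 1} x \<partial>P)"
      by (rule nn_integral_indicator[symmetric, OF meas_set])
    also have "\<dots> = (\<integral>\<^sup>+x. \<Phi> (Q x) (R x) \<partial>P)"
      by (rule nn_integral_cong) (auto simp: indicator_def \<Phi>_def)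
    finally show ?thesis unfolding cone_eq IJ(4) P_def .
  qed
  also have "\<dots> = (\<integral>\<^sup>+x. (\<integral>\<^sup>+y. \<Phi> (Q (merge I J (x, y))) (R (merge I J (x, y))) \<partial>PiM J (\<lambda>_. lborel)) \<partial>PiM I (\<lambda>_. lborel))"
    by (rule product_nn_integral_fold) (use IJ Phi_meas[unfolded P_def] in auto)
  also have "\<dots> = (\<integral>\<^sup>+x. (\<integral>\<^sup>+y. \<Phi> (Q x) (R y) \<partial>PiM J (\<lambda>_. lborel)) \<partial>PiM I (\<lambda>_. lborel))"
  proof -
    have "Q (merge I J (x, y)) = Q x" "R (merge I J (x, y)) = R y" for x y
      using IJ(1) unfolding Q_def R_def by (auto intro!: sum.cong simp: merge_def)
    then show ?thesis by simp
  qed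
  also have "\<dots> \<le> (\<integral>\<^sup>+x. K (Q x) \<partial>PiM I (\<lambda>_. lborel))"
  proof (rule nn_integral_mono)
    fix x :: "nat \<Rightarrow> real"
    define u where "u = Q x"
    have u0: "u \<ge> 0" unfolding u_def Q_def by (simp add: sum_nonneg)
    have "(\<integral>\<^sup>+y. \<Phi> u (R y) \<partial>PiM J (\<lambda>_. lborel)) =
          (\<integral>\<^sup>+v. ennreal (cb * v^(b-1)) * indicator {0..} v * \<Phi> u v \<partial>lborel)"
      unfolding R_def cb_def by (rule radial_integral[OF IJ(3) cardJ b]) simp
    also have "\<dots> \<le> (\<integral>\<^sup>+v. ennreal (cb * v^(b-1)) * indicator {0..M u} v * indicator {0..1} u \<partial>lborel)"
    proof (rule nn_integral_mono)
      fix v :: real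
      show "ennreal (cb * v^(b-1)) * indicator {0..} v * \<Phi> u v \<le> ennreal (cb * v^(b-1)) * indicator {0..M u} v * indicator {0..1} u"
      proof (cases "v \<ge> 0 \<and> 0 < u + v \<and> u + v \<le> 1 \<and> s * (u + v) \<le> u")
        case True
        then have "v \<le> \<kappa> * u" using s unfolding \<kappa>_def by (simp add: field_simps)
        then have "v \<in> {0..M u}" "u \<in> {0..1}" using True u0 by (auto simp: M_def)
        then show ?thesis by (simp add: indicator_def \<Phi>_def)
      next
        case False
        then show ?thesis by (auto simp: indicator_def \<Phi>_def)
      qed
    qed
    also have "\<dots> = (\<integral>\<^sup>+v. ennreal (cb * v^(b-1)) * indicator {0..M u} v \<partial>lborel) * indicator {0..1} u"
      by (rule nn_integral_multc) simp
    also have "\<dots> = K u"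
    proof (cases "u \<in> {0..1}")
      case True
      then have "M u \<ge> 0" using \<kappa>0 by (auto simp: M_def)
      then have "(\<integral>\<^sup>+v. ennreal (cb * v^(b-1)) * indicator {0..M u} v \<partial>lborel) = ennreal (cb * M u ^ b / b)"
        using b cb0 by (intro power_integral_0x) auto
      then show ?thesis using True by (simp add: K_def)
    next
      case False
      then show ?thesis by (simp add: K_def)
    qed
    finally show "(\<integral>\<^sup>+y. \<Phi> (Q x) (R y) \<partial>PiM J (\<lambda>_. lborel)) \<le> K (Q x)" unfolding u_def .
  qed
  also have "\<dots> = (\<integral>\<^sup>+u. ennreal (ca * u^(a-1)) * indicator {0..} u * K u \<partial>lborel)"
    unfolding Q_def ca_def by (rule radial_integral[OF IJ(2) cardI a K_meas])
  also have "\<dots> \<le> (\<integral>\<^sup>+u. ennreal (ca * cb / b * \<kappa>^b * u^(a+b-1)) * indicator {0..s} u +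
                      ennreal (ca * cb / b * (u^(a-1) * (1-u)^b)) * indicator {s..1} u \<partial>lborel)"
  proof (rule nn_integral_mono)
    fix u :: real
    show "ennreal (ca * u^(a-1)) * indicator {0..} u * K u \<le> ennreal (ca * cb / b * \<kappa>^b * u^(a+b-1)) * indicator {0..s} u +
                      ennreal (ca * cb / b * (u^(a-1) * (1-u)^b)) * indicator {s..1} u"
    proof (cases "u \<in> {0..1}")
      case False
      then show ?thesis by (simp add: K_def)
    next
      case True
      then have u: "0 \<le> u" "u \<le> 1" by auto
      have M0: "M u \<ge> 0" using u \<kappa>0 by (auto simp: M_def)
      have lhs: "ennreal (ca * u^(a-1)) * indicator {0..} u * K u = ennreal (ca * cb / b * (u^(a-1) * M u ^ b))"
        using u M0 ca0 cb0 by (simp add: K_def ennreal_mult'[symmetric] mult_ac)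
      show ?thesis
      proof (cases "u \<le> s")
        case True
        have "M u ^ b \<le> (\<kappa> * u) ^ b" using M0 by (intro power_mono) (auto simp: M_def)
        then have "u^(a-1) * M u ^ b \<le> u^(a-1) * (\<kappa> * u) ^ b" using u by (intro mult_left_mono) auto
        also have "\<dots> = \<kappa>^b * (u^(a-1) * u^b)" by (simp add: power_mult_distrib mult_ac)
        also have "u^(a-1) * u^b = u^(a+b-1)" using a by (simp add: power_add[symmetric])
        finally have "u^(a-1) * M u ^ b \<le> \<kappa>^b * u^(a+b-1)" .
        then have "ca * cb / b * (u^(a-1) * M u ^ b) \<le> ca * cb / b * (\<kappa>^b * u^(a+b-1))"
          by (rule mult_left_mono) (use ca0 cb0 in auto)
        then have "ca * cb / b * (u^(a-1) * M u ^ b) \<le> ca * cb / b * \<kappa>^b * u^(a+b-1)"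
          by (simp add: mult.assoc)
        then have "ennreal (ca * cb / b * (u^(a-1) * M u ^ b)) \<le> ennreal (ca * cb / b * \<kappa>^b * u^(a+b-1)) * indicator {0..s} u"
          using True u by (simp add: ennreal_leI)
        then show ?thesis unfolding lhs by (rule order_trans) simp
      next
        case False
        have "M u ^ b \<le> (1 - u) ^ b" using M0 by (intro power_mono) (auto simp: M_def)
        then have "u^(a-1) * M u ^ b \<le> u^(a-1) * (1 - u) ^ b" using u by (intro mult_left_mono) auto
        then have "ca * cb / b * (u^(a-1) * M u ^ b) \<le> ca * cb / b * (u^(a-1) * (1-u)^b)"
          by (rule mult_left_mono) (use ca0 cb0 in auto)
        then have "ennreal (ca * cb / b * (u^(a-1) * M u ^ b)) \<le> ennreal (ca * cb / b * (u^(a-1) * (1-u)^b)) * indicator {s..1} u"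
          using False u by (simp add: ennreal_leI)
        then show ?thesis unfolding lhs by (rule order_trans) simp
      qed
    qed
  qed
  also have "\<dots> = (\<integral>\<^sup>+u. ennreal (ca * cb / b * \<kappa>^b * u^(a+b-1)) * indicator {0..s} u \<partial>lborel) +
                  (\<integral>\<^sup>+u. ennreal (ca * cb / b * (u^(a-1) * (1-u)^b)) * indicator {s..1} u \<partial>lborel)"
    by (rule nn_integral_add) auto
  also have "(\<integral>\<^sup>+u. ennreal (ca * cb / b * \<kappa>^b * u^(a+b-1)) * indicator {0..s} u \<partial>lborel) =
             ennreal (ca * cb / b * \<kappa>^b * s^(a+b) / (a+b))"
    using s a ca0 cb0 \<kappa>0 by (subst power_integral_0x) auto
  also have "(\<integral>\<^sup>+u. ennreal (ca * cb / b * (u^(a-1) * (1-u)^b)) * indicator {s..1} u \<partial>lborel) =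
             ennreal (ca * cb / b * B)"
    by (rule nn_integral_has_integral_lebesgue'[OF _ has_integral_mult_right[OF B]])
       (use ca0 cb0 s(2,3) in \<open>auto intro!: mult_nonneg_nonneg divide_nonneg_nonneg\<close>)
  also have "ennreal (ca * cb / b * \<kappa>^b * s^(a+b) / (a+b)) + ennreal (ca * cb / b * B) =
             ennreal (pi^a / fact (a-1) * (pi^b / fact (b-1)) / b * (((1-s)/s)^b * s^(a+b) / (a+b) + B))"
  proof -
    have B0: "B \<ge> 0"
      by (rule has_integral_nonneg[OF B]) (use s(2) in auto)
    have X0: "0 \<le> ca * cb / b * \<kappa>^b * s^(a+b) / (a+b)" using ca0 cb0 \<kappa>0 s by simp
    have Y0: "0 \<le> ca * cb / b * B" using ca0 cb0 B0 by simp
    have "ennreal (ca * cb / b * \<kappa>^b * s^(a+b) / (a+b)) + ennreal (ca * cb / b * B) =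
          ennreal (ca * cb / b * \<kappa>^b * s^(a+b) / (a+b) + ca * cb / b * B)"
      using X0 Y0 by (rule ennreal_plus[symmetric])
    also have "ca * cb / b * \<kappa>^b * s^(a+b) / (a+b) + ca * cb / b * B = ca * cb / b * (\<kappa>^b * s^(a+b) / (a+b) + B)"
      by (simp add: algebra_simps)
    finally show ?thesis by (simp add: ca_def cb_def \<kappa>_def)
  qed
  finally show ?thesis .
qed


lemma term_deriv:
  "((\<lambda>u::real. u^i * (1-u)^m) has_real_derivative
     (real i * u^(i-1) * (1-u)^m - real m * u^i * (1-u)^(m-1))) (at u)"
  by (rule derivative_eq_intros refl | simp)+

lemma beta_deriv:
  fixes d j :: nat assumes "j < d"
  shows "((\<lambda>u::real. \<Sum>k\<le>j. real (d choose k) * (u^k * (1-u)^(d-k))) has_real_derivative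
           (- (real d * real ((d-1) choose j) * (u^j * (1-u)^(d-1-j))))) (at u)"
  using assms
proof (induction j)
  case 0
  have "((\<lambda>u::real. real (d choose 0) * (u^0 * (1-u)^(d-0))) has_real_derivative
           real (d choose 0) * (real 0 * u^(0-1) * (1-u)^(d-0) - real (d-0) * u^0 * (1-u)^(d-0-1))) (at u)"
    by (intro DERIV_cmult term_deriv)
  then show ?case by simp
next
  case (Suc j)
  have IH: "((\<lambda>u::real. \<Sum>k\<le>j. real (d choose k) * (u^k * (1-u)^(d-k))) has_real_derivative
           (- (real d * real ((d-1) choose j) * (u^j * (1-u)^(d-1-j))))) (at u)"
    using Suc by simp
  have T: "((\<lambda>u::real. real (d choose Suc j) * (u^Suc j * (1-u)^(d - Suc j))) has_real_derivative
           real (d choose Suc j) * (real (Suc j) * u^(Suc j - 1) * (1-u)^(d - Suc j) - real (d - Suc j) * u^Suc j * (1-u)^(d - Suc j - 1))) (at u)"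
    by (intro DERIV_cmult term_deriv)
  have e1: "real (Suc j) * real (d choose Suc j) = real d * real ((d-1) choose j)"
    using binomial_absorption[of j d] by (metis of_nat_mult)
  have e2: "real (d - Suc j) * real (d choose Suc j) = real d * real ((d-1) choose Suc j)"
    using binomial_absorb_comp[of d "Suc j"] by (metis of_nat_mult)
  have e3: "d - 1 - j = d - Suc j" "d - Suc j - 1 = d - 1 - Suc j" by auto
  have "((\<lambda>u::real. (\<Sum>k\<le>j. real (d choose k) * (u^k * (1-u)^(d-k))) + real (d choose Suc j) * (u^Suc j * (1-u)^(d - Suc j))) has_real_derivative
          (- (real d * real ((d-1) choose j) * (u^j * (1-u)^(d-1-j)))) +
          real (d choose Suc j) * (real (Suc j) * u^(Suc j - 1) * (1-u)^(d - Suc j) - real (d - Suc j) * u^Suc j * (1-u)^(d - Suc j - 1))) (at u)"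
    by (rule DERIV_add[OF IH T])
  moreover have "(- (real d * real ((d-1) choose j) * (u^j * (1-u)^(d-1-j)))) +
          real (d choose Suc j) * (real (Suc j) * u^(Suc j - 1) * (1-u)^(d - Suc j) - real (d - Suc j) * u^Suc j * (1-u)^(d - Suc j - 1))
       = - (real d * real ((d-1) choose Suc j) * (u^Suc j * (1-u)^(d-1-Suc j)))"
  proof -
    have "real (d choose Suc j) * (real (Suc j) * u^(Suc j - 1) * (1-u)^(d - Suc j) - real (d - Suc j) * u^Suc j * (1-u)^(d - Suc j - 1))
        = (real (Suc j) * real (d choose Suc j)) * (u^j * (1-u)^(d - Suc j)) - (real (d - Suc j) * real (d choose Suc j)) * (u^Suc j * (1-u)^(d - 1 - Suc j))"
      by (simp add: algebra_simps e3)
    also have "\<dots> = real d * real ((d-1) choose j) * (u^j * (1-u)^(d - Suc j)) - real d * real ((d-1) choose Suc j) * (u^Suc j * (1-u)^(d - 1 - Suc j))"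
      unfolding e1 e2 ..
    finally show ?thesis by (simp add: e3)
  qed
  ultimately show ?case by (simp add: add.commute)
qed

lemma binom_identity:
  fixes s :: real and D j :: nat
  assumes "j \<le> D"
  shows "real (D choose j) * (s^Suc j * (1-s)^(D-j)) + (\<Sum>k\<le>j. real (Suc D choose k) * (s^k * (1-s)^(Suc D - k)))
       = (\<Sum>k\<le>j. real (D choose k) * (s^k * (1-s)^(D-k)))"
  using assms
proof (induction j)
  case 0
  then show ?case by (simp add: algebra_simps)
next
  case (Suc j)
  then have IH: "(\<Sum>k\<le>j. real (Suc D choose k) * (s^k * (1-s)^(Suc D - k))) =
      (\<Sum>k\<le>j. real (D choose k) * (s^k * (1-s)^(D-k))) - real (D choose j) * (s^Suc j * (1-s)^(D-j))"
    by simp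
  have e: "(1-s)^(D-j) = (1-s) * (1-s)^(D - Suc j)" "Suc D - Suc j = D - j"
    using Suc.prems by (auto simp: power_Suc[symmetric] Suc_diff_Suc)
  have "real (D choose Suc j) * (s^Suc (Suc j) * (1-s)^(D - Suc j)) +
        (\<Sum>k\<le>Suc j. real (Suc D choose k) * (s^k * (1-s)^(Suc D - k)))
      = real (D choose Suc j) * (s^Suc (Suc j) * (1-s)^(D - Suc j)) +
        ((\<Sum>k\<le>j. real (D choose k) * (s^k * (1-s)^(D-k))) - real (D choose j) * (s^Suc j * (1-s)^(D-j))) +
        (real (D choose j) + real (D choose Suc j)) * (s^Suc j * (1-s)^(D-j))"
    by (simp add: IH e(2))
  also have "\<dots> = (\<Sum>k\<le>j. real (D choose k) * (s^k * (1-s)^(D-k))) +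
        real (D choose Suc j) * (s^Suc j * (1-s)^(D - Suc j)) * (s + (1 - s))"
    by (simp add: e(1) algebra_simps)
  also have "\<dots> = (\<Sum>k\<le>Suc j. real (D choose k) * (s^k * (1-s)^(D-k)))"
    by simp
  finally show ?case .
qed

lemma beta_integral:
  fixes a b :: nat and s :: real
  assumes a: "a > 0" and b: "b > 0" and s: "0 \<le> s" "s \<le> 1"
  shows "((\<lambda>u. u^(a-1) * (1-u)^b) has_integral
          ((\<Sum>k\<le>a-1. real ((a+b) choose k) * (s^k * (1-s)^((a+b)-k))) / (real (a+b) * real ((a+b-1) choose (a-1))))) {s..1}"
proof -
  define d where "d = a + b"
  define c where "c = real d * real ((d-1) choose (a-1))"
  define \<beta> where "\<beta> u = (\<Sum>k\<le>a-1. real (d choose k) * (u^k * (1-u)^(d-k)))" for u :: real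
  have c0: "c > 0" unfolding c_def d_def using a b by auto
  have lt: "a - 1 < d" unfolding d_def using a b by auto
  have ex: "d - 1 - (a - 1) = b" unfolding d_def using a by auto
  have "((\<lambda>u. u^(a-1) * (1-u)^b) has_integral ((- \<beta> 1 / c) - (- \<beta> s / c))) {s..1}"
  proof (rule fundamental_theorem_of_calculus)
    show "s \<le> 1" by fact
    fix u :: real
    have "(\<beta> has_real_derivative (- (c * (u^(a-1) * (1-u)^b)))) (at u)"
      using beta_deriv[OF lt, of u] unfolding \<beta>_def c_def ex by (simp add: mult.assoc)
    then have "((\<lambda>u. - \<beta> u / c) has_real_derivative (u^(a-1) * (1-u)^b)) (at u)"
      using c0 by (auto intro!: derivative_eq_intros)
    then show "((\<lambda>u. - \<beta> u / c) has_vector_derivative (u^(a-1) * (1-u)^b)) (at u within {s..1})"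
      by (simp add: has_real_derivative_iff_has_vector_derivative has_vector_derivative_at_within)
  qed
  moreover have "\<beta> 1 = 0"
    unfolding \<beta>_def using lt by (intro sum.neutral) auto
  ultimately show ?thesis unfolding \<beta>_def c_def d_def by simp
qed


theorem lemma3:
  fixes n m :: nat and h :: real
  assumes "0 < n" and "0 < m" and "2 * m < n"
    and "0 < h" and "h \<le> 1"
    and "h\<^sup>2 - 2 powr (- 2 * real m) > 0"
  shows "sphere_area (2 * 2 ^ n) (CAP (2 * 2 ^ n) (2 * 2 ^ (n - 2 * m)) h)
           / (2 * pi ^ (2 ^ n) / Gamma (real (2 ^ n)))
         \<le> exp (- 2 * (real (2 ^ n) + 1) * (h\<^sup>2 - 2 powr (- 2 * real m))\<^sup>2)"
proof -
  define d :: nat where "d = 2^n"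
  define a :: nat where "a = 2^(n - 2*m)"
  define b :: nat where "b = d - a"
  define s where "s = h\<^sup>2"
  define r where "r = 2 powr (- 2 * real m)"
  define \<delta> where "\<delta> = s - r"
  have a0: "a > 0" unfolding a_def by simp
  have ad4: "4 * a \<le> d"
  proof -
    have "4 * a = 2^(Suc (Suc (n - 2*m)))" unfolding a_def by simp
    also have "\<dots> \<le> 2^n" using assms(2,3) by (intro power_increasing) auto
    finally show ?thesis unfolding d_def .
  qed
  have b0: "b > 0" unfolding b_def using ad4 a0 by linarith
  have dab: "d = a + b" unfolding b_def using ad4 by linarith
  have d2: "d \<ge> 2" using ad4 a0 by linarith
  have r_eq: "r = real a / real d"
  proof -
    have "real d = real a * 2^(2*m)" unfolding a_def d_def
      using assms(3) by (simp add: power_add[symmetric])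
    moreover have "r = 1 / 2^(2*m)" unfolding r_def
      by (simp add: powr_minus powr_realpow[symmetric] powr_mult[symmetric] divide_simps)
    ultimately show ?thesis using a0 by simp
  qed
  have s0: "0 < s" "s \<le> 1" unfolding s_def using assms(4,5) by (auto simp: power_le_one)
  have \<delta>0: "\<delta> > 0" unfolding \<delta>_def s_def r_def using assms(6) by simp
  have \<delta>1: "\<delta> \<le> 1 - r" unfolding \<delta>_def using s0 by simp
  define C where "C = real ((d-1) choose (a-1))"
  define \<beta> where "\<beta> = (\<Sum>k\<le>a-1. real (d choose k) * (s^k * (1-s)^(d-k)))"
  define Bv where "Bv = \<beta> / (real d * C)"
  have Bint: "((\<lambda>u. u^(a-1) * (1-u)^b) has_integral Bv) {s..1}"
    using beta_integral[OF a0 b0, of s] s0 unfolding Bv_def \<beta>_def C_def dab by simp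
  define X where "X = pi^a / fact (a-1) * (pi^b / fact (b-1)) / b * (((1-s)/s)^b * s^(a+b) / (a+b) + Bv)"
  have emb: "emeasure (PiM {..<2*d} (\<lambda>_. lborel)) (cone (2*d) (CAP (2*d) (2*a) h)) \<le> ennreal X"
    unfolding X_def dab using cone_bound[OF a0 b0 s_def s0 Bint] .
  have Bv0: "Bv \<ge> 0" by (rule has_integral_nonneg[OF Bint]) (use s0 in auto)
  have X0: "X \<ge> 0" unfolding X_def using Bv0 s0 by (auto intro!: mult_nonneg_nonneg divide_nonneg_nonneg add_nonneg_nonneg)
  define \<mu> where "\<mu> = measure (PiM {..<2*d} (\<lambda>_. lborel)) (cone (2*d) (CAP (2*d) (2*a) h))"
  have \<mu>X: "\<mu> \<le> X" unfolding \<mu>_def measure_def by (rule enn2real_leI[OF X0 emb])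
  have Gd: "Gamma (real d) = fact (d-1)"
  proof -
    have eq: "real d = 1 + real (d-1)" using d2 by simp
    have "Gamma (real d) = Gamma (1 + real (d-1))" by (simp only: eq)
    also have "\<dots> = fact (d-1)" by (rule Gamma_fact)
    finally show ?thesis .
  qed
  have LHS: "sphere_area (2 * 2 ^ n) (CAP (2 * 2 ^ n) (2 * 2 ^ (n - 2 * m)) h)
           / (2 * pi ^ (2 ^ n) / Gamma (real (2 ^ n))) = real d * fact (d-1) * \<mu> / pi^d"
    unfolding sphere_area_def \<mu>_def d_def[symmetric] a_def[symmetric] Gd by (simp add: field_simps)
  also have "\<dots> \<le> real d * fact (d-1) * X / pi^d"
    using \<mu>X by (intro divide_right_mono mult_left_mono) auto
  also have "real d * fact (d-1) * X / pi^d = C * (s^a * (1-s)^b) + \<beta>"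
  proof -
    have "d - 1 - (a - 1) = b" using dab a0 by simp
    then have fbn: "fact (a-1) * fact b * ((d-1) choose (a-1)) = (fact (d-1) :: nat)"
      using binomial_fact_lemma[of "a-1" "d-1"] dab by simp
    have fb: "fact (d-1) = fact (a-1) * fact b * C"
      unfolding C_def using arg_cong[OF fbn, of real] by (simp add: of_nat_fact)
    have fb2: "(fact b :: real) = real b * fact (b-1)" using b0 by (simp add: fact_reduce)
    have pd: "pi^d = pi^a * pi^b" unfolding dab by (simp add: power_add)
    have ks: "((1-s)/s)^b * s^(a+b) = s^a * (1-s)^b"
      using s0 by (simp add: power_divide power_add field_simps)
    have C0: "C > 0" unfolding C_def using dab a0 by simp
    have dr: "real (a + b) = real d" using dab by simp
    have "real d * fact (d-1) * X / pi^d = real d * C * (s^a * (1-s)^b / (a+b) + Bv)"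
      unfolding X_def fb fb2 pd ks dr using b0 by (simp add: field_simps)
    also have "\<dots> = C * (s^a * (1-s)^b) + \<beta>"
      unfolding Bv_def dr using C0 d2 by (simp add: field_simps)
    finally show ?thesis .
  qed
  also have "C * (s^a * (1-s)^b) + \<beta> = (\<Sum>k\<le>a-1. real ((d-1) choose k) * (s^k * (1-s)^((d-1)-k)))"
  proof -
    have "a - 1 \<le> d - 1" using dab by simp
    from binom_identity[OF this, of s]
    show ?thesis using dab a0 unfolding C_def \<beta>_def by (simp add: Suc_diff_Suc)
  qed
  also have "\<dots> = measure_pmf.prob (binomial_pmf (d-1) s) {x. real x \<le> real (d-1) * s - (real (d-1) * s - real (a-1))}"
  proof -
    have "{x. real x \<le> real (d-1) * s - (real (d-1) * s - real (a-1))} = {..a-1}" by auto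
    moreover have "pmf (binomial_pmf (d-1) s) k = real ((d-1) choose k) * (s^k * (1-s)^((d-1)-k))" for k
      using s0 by (simp add: mult.assoc)
    ultimately show ?thesis by (simp add: measure_measure_pmf_finite)
  qed
  also have "\<dots> \<le> exp (- 2 * (real (d-1) * s - real (a-1))\<^sup>2 / real (d-1))"
  proof (rule binomial_distribution.prob_le)
    show "binomial_distribution s" using s0 by unfold_locales auto
    show "0 < d - 1" using d2 by simp
    show "0 \<le> real (d-1) * s - real (a-1)"
    proof -
      have e: "real (a-1) = real a - 1" "real (d-1) = real d - 1" using a0 d2 by auto
      have "s \<ge> real a / real d" using \<delta>0 r_eq unfolding \<delta>_def by simp
      then have ds: "real a \<le> real d * s" using d2 by (simp add: divide_le_eq mult.commute)
      have "real (d-1) * s - real (a-1) = (real d * s - real a) + (1 - s)"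
        unfolding e by (simp add: algebra_simps)
      then show ?thesis using ds s0 by linarith
    qed
  qed
  also have "\<dots> \<le> exp (- 2 * (real (2 ^ n) + 1) * (h\<^sup>2 - 2 powr (- 2 * real m))\<^sup>2)"
  proof -
    define D where "D = real d - 1"
    define t where "t = 1 - r"
    have D0: "D > 0" unfolding D_def using d2 by simp
    have eps: "real (d-1) * s - real (a-1) = D * \<delta> + t"
    proof -
      have "real (a-1) = real a - 1" "real (d-1) = real d - 1" using a0 d2 by auto
      moreover have "real a = r * real d" using r_eq d2 by simp
      ultimately show ?thesis unfolding D_def t_def \<delta>_def by (simp add: algebra_simps)
    qed
    have tdel: "\<delta> \<le> t" using \<delta>1 unfolding t_def .
    have key: "(D + 2) * \<delta>\<^sup>2 \<le> (D * \<delta> + t)\<^sup>2 / D"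
    proof -
      have h1: "D * \<delta> * \<delta> \<le> D * \<delta> * t" using tdel by (rule mult_left_mono) (use D0 \<delta>0 in auto)
      have eq: "(D * \<delta> + t)\<^sup>2 - (D + 2) * \<delta>\<^sup>2 * D = 2 * (D * \<delta> * t - D * \<delta> * \<delta>) + t\<^sup>2"
        by (simp add: power2_eq_square algebra_simps)
      have "0 \<le> 2 * (D * \<delta> * t - D * \<delta> * \<delta>) + t\<^sup>2"
        by (intro add_nonneg_nonneg) (use h1 in auto)
      then have "0 \<le> (D * \<delta> + t)\<^sup>2 - (D + 2) * \<delta>\<^sup>2 * D" by (simp only: eq)
      then have "(D + 2) * \<delta>\<^sup>2 * D \<le> (D * \<delta> + t)\<^sup>2" by simp
      then show ?thesis using D0 by (simp add: field_simps)
    qed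
    have e2: "real (2^n) + 1 = D + 2" unfolding D_def d_def by simp
    have e3: "h\<^sup>2 - 2 powr (- 2 * real m) = \<delta>" unfolding \<delta>_def s_def r_def ..
    have e1: "real (d - 1) = D" unfolding D_def using d2 by simp
    have ineq: "- 2 * (D * \<delta> + t)\<^sup>2 / D \<le> - 2 * (D + 2) * \<delta>\<^sup>2"
    proof -
      have q1: "- 2 * (D * \<delta> + t)\<^sup>2 / D = - 2 * ((D * \<delta> + t)\<^sup>2 / D)" by (simp only: times_divide_eq_right)
      have q2: "- 2 * (D + 2) * \<delta>\<^sup>2 = - 2 * ((D + 2) * \<delta>\<^sup>2)" by (simp only: mult.assoc)
      have "- 2 * ((D * \<delta> + t)\<^sup>2 / D) \<le> - 2 * ((D + 2) * \<delta>\<^sup>2)"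
        by (rule mult_left_mono_neg[OF key]) simp
      then show ?thesis unfolding q1 q2 .
    qed
    then have G: "exp (- 2 * (D * \<delta> + t)\<^sup>2 / D) \<le> exp (- 2 * (D + 2) * \<delta>\<^sup>2)"
      by (simp only: exp_le_cancel_iff)
    show ?thesis unfolding eps unfolding e1 e2 e3 by (rule G)
  qed
  finally show ?thesis .
qed

end
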